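(* Let $Q=\partial_\psi S$ be a $\partial_\psi$-delta operator, with $S\in\Sigma_\psi$ invertible, and let $(p_n)_{n\ge0}$ be its $\partial_\psi$-basic polynomial sequence. Then for all $n>0$: (1) $p_n(x)=Q'\,S^{-n-1}x^n$; (2) $p_n(x)=S^{-n}x^n-\frac{n_\psi}{n}\,(S^{-n})'\,x^{n-1}$; (3) $p_n(x)=\frac{n_\psi}{n}\,\hat x_\psi\,S^{-n}x^{n-1}$; (4) (ψ-Rodrigues formula) $p_n(x)=\frac{n_\psi}{n}\,\hat x_\psi\,(Q')^{-1}p_{n-1}(x)$, where $Q'$ is invertible in $\Sigma_\psi$.
   Context: Let $F$ be a field of characteristic $0$, $P=F[x]$. Fix $(\psi_n)_{n\ge0}$ in $F$ with $\psi_0=1$, $\psi_n\ne0$, $\psi_{-1}=0$; $n_\psi=\psi_{n-1}/\psi_n$, $n_\psi!=1/\psi_n$, $0_\psi!=1$. $\partial_\psi x^n=n_\psi x^{n-1}$ (linear); $E^a(\partial_\psi)=\sum_k\frac{a^k}{k_\psi!}\partial_\psi^k$. $\Sigma_\psi$: algebra of linear $T:P\to P$ commuting with all $E^a(\partial_\psi)$. A $\partial_\psi$-delta operator is $Q\in\Sigma_\psi$ with $Q(x)$ a nonzero constant; its $\partial_\psi$-basic sequence: $\deg p_n=n$, $p_0=1$, $p_n(0)=0$ for $n>0$, $Qp_n=n_\psi p_{n-1}$. $\hat x_\psi x^n=\frac{n+1}{(n+1)_\psi}x^{n+1}$ (linear); the Pincherle $\psi$-derivative of $T\in\Sigma_\psi$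 is $T'=T\hat x_\psi-\hat x_\psi T\in\Sigma_\psi$. *)

theory Defs
  imports "HOL-Computational_Algebra.Polynomial"
begin

text \<open>Psi-umbral calculus on P = F[x], F a field of characteristic 0.
  The sequence psi is an arbitrary function nat => F; the standing assumptions
  psi 0 = 1 and psi n \<noteq> 0 are stated as hypotheses of the theorem.\<close>

definition admissible_psi :: "(nat \<Rightarrow> 'a::field_char_0) \<Rightarrow> bool" where
  "admissible_psi psi \<longleftrightarrow> psi 0 = 1 \<and> (\<forall>n. psi n \<noteq> 0)"

text \<open>n_psi = psi (n-1) / psi n, with psi(-1) = 0, so 0_psi = 0.\<close>
definition nsub :: "(nat \<Rightarrow> 'a::field_char_0) \<Rightarrow> nat \<Rightarrow> 'a" where
  "nsub psi n = (if n = 0 then 0 else psi (n - 1) / psi n)"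

definition nfact :: "(nat \<Rightarrow> 'a::field_char_0) \<Rightarrow> nat \<Rightarrow> 'a" where
  "nfact psi n = 1 / psi n"

definition psi_deriv :: "(nat \<Rightarrow> 'a::field_char_0) \<Rightarrow> 'a poly \<Rightarrow> 'a poly" where
  "psi_deriv psi p = (\<Sum>k\<le>degree p. monom (nsub psi k * coeff p k) (k - 1))"

text \<open>E^a(partial_psi) = sum_k a^k / k_psi! partial_psi^k (finite on each polynomial).\<close>
definition psi_exp :: "(nat \<Rightarrow> 'a::field_char_0) \<Rightarrow> 'a \<Rightarrow> 'a poly \<Rightarrow> 'a poly" where
  "psi_exp psi a p = (\<Sum>k\<le>degree p. smult (a ^ k / nfact psi k) ((psi_deriv psi ^^ k) p))"

definition poly_linear :: "('a::field_char_0 poly \<Rightarrow> 'a poly) \<Rightarrow> bool" where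
  "poly_linear T \<longleftrightarrow> (\<forall>p q. T (p + q) = T p + T q) \<and> (\<forall>c p. T (smult c p) = smult c (T p))"

definition Sigma_psi :: "(nat \<Rightarrow> 'a::field_char_0) \<Rightarrow> ('a poly \<Rightarrow> 'a poly) set" where
  "Sigma_psi psi = {T. poly_linear T \<and> (\<forall>a p. T (psi_exp psi a p) = psi_exp psi a (T p))}"

definition Sigma_inverse :: "(nat \<Rightarrow> 'a::field_char_0) \<Rightarrow> ('a poly \<Rightarrow> 'a poly) \<Rightarrow> ('a poly \<Rightarrow> 'a poly) \<Rightarrow> bool" where
  "Sigma_inverse psi T R \<longleftrightarrow> T \<in> Sigma_psi psi \<and> R \<in> Sigma_psi psi \<and> T \<circ> R = id \<and> R \<circ> T = id"

definition psi_delta :: "(nat \<Rightarrow> 'a::field_char_0) \<Rightarrow> ('a poly \<Rightarrow> 'a poly) \<Rightarrow> bool" where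
  "psi_delta psi Q \<longleftrightarrow> Q \<in> Sigma_psi psi \<and> (\<exists>c. c \<noteq> 0 \<and> Q [:0, 1:] = [:c:])"

text \<open>Basic sequence: Q p_n = n_psi p_(n-1); for n = 0 the right side is 0 since 0_psi = 0.\<close>
definition psi_basic_seq :: "(nat \<Rightarrow> 'a::field_char_0) \<Rightarrow> ('a poly \<Rightarrow> 'a poly) \<Rightarrow> (nat \<Rightarrow> 'a poly) \<Rightarrow> bool" where
  "psi_basic_seq psi Q p \<longleftrightarrow>
     p 0 = 1 \<and> (\<forall>n. degree (p n) = n) \<and> (\<forall>n>0. poly (p n) 0 = 0) \<and>
     (\<forall>n. Q (p n) = smult (nsub psi n) (p (n - 1)))"

definition xhat :: "(nat \<Rightarrow> 'a::field_char_0) \<Rightarrow> 'a poly \<Rightarrow> 'a poly" where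
  "xhat psi p = (\<Sum>k\<le>degree p. monom (of_nat (k + 1) / nsub psi (k + 1) * coeff p k) (k + 1))"

definition pincherle :: "(nat \<Rightarrow> 'a::field_char_0) \<Rightarrow> ('a poly \<Rightarrow> 'a poly) \<Rightarrow> 'a poly \<Rightarrow> 'a poly" where
  "pincherle psi T = (\<lambda>p. T (xhat psi p) - xhat psi (T p))"

end

theory Submission
  imports Defs
begin


lemma adm_ne: "admissible_psi psi \<Longrightarrow> psi n \<noteq> 0"
  by (simp add: admissible_psi_def)

lemma adm_0: "admissible_psi psi \<Longrightarrow> psi 0 = 1"
  by (simp add: admissible_psi_def)

lemma nsub_ne: "admissible_psi psi \<Longrightarrow> n > 0 \<Longrightarrow> nsub psi n \<noteq> 0"
  by (simp add: nsub_def adm_ne)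

lemma nsub_Suc_ne: "admissible_psi psi \<Longrightarrow> nsub psi (Suc n) \<noteq> 0"
  by (simp add: nsub_ne)

lemma coeff_D: "coeff (psi_deriv psi p) j = nsub psi (j+1) * coeff p (j+1)"
proof -
  have "coeff (psi_deriv psi p) j = (\<Sum>k\<le>degree p. (if k = j+1 then nsub psi k * coeff p k else 0))"
    unfolding psi_deriv_def coeff_sum coeff_monom
    by (rule sum.cong) (auto simp: nsub_def)
  also have "\<dots> = nsub psi (j+1) * coeff p (j+1)"
    by (auto simp: coeff_eq_0)
  finally show ?thesis .
qed

lemma coeff_X: "coeff (xhat psi p) j = (if j = 0 then 0 else of_nat j / nsub psi j * coeff p (j-1))"
proof -
  have "coeff (xhat psi p) j = (\<Sum>k\<le>degree p. (if k = j - 1 \<and> j > 0 then of_nat j / nsub psi j * coeff p k else 0))"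
    unfolding xhat_def coeff_sum coeff_monom
    by (rule sum.cong) auto
  also have "\<dots> = (if j = 0 then 0 else of_nat j / nsub psi j * coeff p (j-1))"
    by (cases j) (auto simp: coeff_eq_0)
  finally show ?thesis .
qed

lemma coeff_Dpow: "admissible_psi psi \<Longrightarrow>
  coeff ((psi_deriv psi ^^ k) p) j = psi j / psi (j+k) * coeff p (j+k)"
proof (induction k arbitrary: j)
  case 0 then show ?case by (simp add: adm_ne)
next
  case (Suc k)
  show ?case using Suc.prems
    by (simp add: coeff_D Suc.IH nsub_def adm_ne field_simps)
qed

lemma linear_D: "poly_linear (psi_deriv psi)"
  unfolding poly_linear_def by (auto simp: poly_eq_iff coeff_D algebra_simps)

lemma linear_X: "poly_linear (xhat psi)"
  unfolding poly_linear_def by (auto simp: poly_eq_iff coeff_X algebra_simps)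

lemma D_monom: "psi_deriv psi (monom c n) = monom (nsub psi n * c) (n - 1)"
  by (cases n) (auto simp: poly_eq_iff coeff_D coeff_monom nsub_def)

lemma X_monom: "xhat psi (monom c n) = monom (of_nat (n+1) / nsub psi (n+1) * c) (n + 1)"
  by (auto simp: poly_eq_iff coeff_X coeff_monom)

lemma DX: "admissible_psi psi \<Longrightarrow> psi_deriv psi (xhat psi f) = f + xhat psi (psi_deriv psi f)"
proof -
  assume a: "admissible_psi psi"
  show ?thesis
  proof (subst poly_eq_iff, intro allI)
    fix n
    have "nsub psi (Suc n) \<noteq> 0" "nsub psi (Suc (Suc n)) \<noteq> 0" using nsub_Suc_ne[OF a] by auto
    then show "coeff (psi_deriv psi (xhat psi f)) n = coeff (f + xhat psi (psi_deriv psi f)) n"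
      using nsub_Suc_ne[OF a] by (cases n) (auto simp: coeff_X coeff_D field_simps)
  qed
qed

lemma kerD: "admissible_psi psi \<Longrightarrow> psi_deriv psi g = 0 \<Longrightarrow> g = [:coeff g 0:]"
proof (subst poly_eq_iff, intro allI)
  fix n assume a: "admissible_psi psi" "psi_deriv psi g = 0"
  show "coeff g n = coeff [:coeff g 0:] n"
  proof (cases n)
    case (Suc k)
    have "coeff (psi_deriv psi g) k = 0" using a by simp
    then show ?thesis using Suc nsub_ne[OF a(1), of "k+1"] by (simp add: coeff_D)
  qed simp
qed




lemma lin_add: "poly_linear T \<Longrightarrow> T (p + q) = T p + T q"
  by (simp add: poly_linear_def)
lemma lin_smult: "poly_linear T \<Longrightarrow> T (smult c p) = smult c (T p)"
  by (simp add: poly_linear_def)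
lemma lin_0: "poly_linear T \<Longrightarrow> T 0 = 0"
  using lin_smult[of T 0 0] by simp
lemma lin_neg: "poly_linear T \<Longrightarrow> T (- p) = - T p"
  using lin_smult[of T "-1" p] by simp
lemma lin_diff: "poly_linear T \<Longrightarrow> T (p - q) = T p - T q"
  using lin_add[of T p "-q"] lin_neg[of T q] by simp
lemma lin_sum: "poly_linear T \<Longrightarrow> T (sum f A) = (\<Sum>a\<in>A. T (f a))"
  by (induction A rule: infinite_finite_induct) (auto simp: lin_0 lin_add)

lemma lin_monom: "poly_linear T \<Longrightarrow> T (monom c k) = smult c (T (monom 1 k))"
  using lin_smult[of T c "monom 1 k"] by (simp add: smult_monom)
lemma lin_expand: "poly_linear T \<Longrightarrow> degree p \<le> N \<Longrightarrow>
   T p = (\<Sum>i\<le>N. smult (coeff p i) (T (monom 1 i)))"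
proof -
  assume a: "poly_linear T" "degree p \<le> N"
  have "T p = T (\<Sum>i\<le>N. monom (coeff p i) i)" using poly_as_sum_of_monoms'[OF a(2)] by simp
  also have "\<dots> = (\<Sum>i\<le>N. smult (coeff p i) (T (monom 1 i)))"
    using a(1) by (simp add: lin_sum lin_monom[OF a(1), of "coeff p _"])
  finally show ?thesis .
qed
lemma lin_comp: "poly_linear T \<Longrightarrow> poly_linear U \<Longrightarrow> poly_linear (T \<circ> U)"
  by (simp add: poly_linear_def)
lemma lin_id: "poly_linear id"
  by (simp add: poly_linear_def)
lemma lin_funpow: "poly_linear T \<Longrightarrow> poly_linear (T ^^ n)"
  by (induction n) (auto simp: lin_id lin_comp)

definition comD :: "(nat \<Rightarrow> 'a::field_char_0) \<Rightarrow> ('a poly \<Rightarrow> 'a poly) \<Rightarrow> bool" where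
  "comD psi T \<longleftrightarrow> poly_linear T \<and> (\<forall>p. T (psi_deriv psi p) = psi_deriv psi (T p))"

lemma comD_lin: "comD psi T \<Longrightarrow> poly_linear T" by (simp add: comD_def)
lemma comD_D: "comD psi T \<Longrightarrow> T (psi_deriv psi p) = psi_deriv psi (T p)" by (simp add: comD_def)
lemma comD_comp: "comD psi T \<Longrightarrow> comD psi U \<Longrightarrow> comD psi (T \<circ> U)"
  by (simp add: comD_def lin_comp)
lemma comD_id: "comD psi id" by (simp add: comD_def lin_id)
lemma comD_funpow: "comD psi T \<Longrightarrow> comD psi (T ^^ n)"
  by (induction n) (auto simp: comD_id comD_comp)
lemma comD_Dself: "comD psi (psi_deriv psi)" by (simp add: comD_def linear_D)
lemma comD_Dpow: "comD psi T \<Longrightarrow> T ((psi_deriv psi ^^ k) p) = (psi_deriv psi ^^ k) (T p)"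
  by (induction k) (auto simp: comD_D)

lemma pinch_lin: "poly_linear T \<Longrightarrow> poly_linear (pincherle psi T)"
  unfolding poly_linear_def pincherle_def
  using lin_add[OF linear_X[of psi]] lin_smult[OF linear_X[of psi]] by (simp add: algebra_simps smult_diff_right)

lemma comD_pinch: assumes "admissible_psi psi" "comD psi T" shows "comD psi (pincherle psi T)"
proof -
  have L: "poly_linear T" using assms(2) by (simp add: comD_def)
  have "pincherle psi T (psi_deriv psi p) = psi_deriv psi (pincherle psi T p)" for p
  proof -
    have "psi_deriv psi (pincherle psi T p) = psi_deriv psi (T (xhat psi p)) - psi_deriv psi (xhat psi (T p))"
      unfolding pincherle_def by (rule lin_diff[OF linear_D])
    also have "\<dots> = T (p + xhat psi (psi_deriv psi p)) - (T p + xhat psi (psi_deriv psi (T p)))"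
      by (simp add: comD_D[OF assms(2), symmetric] DX[OF assms(1)])
    also have "\<dots> = pincherle psi T (psi_deriv psi p)"
      by (simp add: pincherle_def lin_add[OF L] comD_D[OF assms(2)])
    finally show ?thesis by simp
  qed
  then show ?thesis using pinch_lin[OF L] by (simp add: comD_def)
qed

lemma Dpow_monom: "admissible_psi psi \<Longrightarrow> (psi_deriv psi ^^ i) (monom 1 m) =
   (if i \<le> m then monom (psi (m - i) / psi m) (m - i) else 0)"
  by (auto simp: poly_eq_iff coeff_Dpow coeff_monom adm_ne)

lemma coeff_via_D: "admissible_psi psi \<Longrightarrow> coeff q i = psi i * coeff ((psi_deriv psi ^^ i) q) 0"
  by (simp add: coeff_Dpow adm_0 adm_ne)

lemma D_one[simp]: "psi_deriv psi 1 = 0"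
  by (simp add: poly_eq_iff coeff_D)

lemma coeff_T_monom: assumes "admissible_psi psi" "comD psi T"
  shows "coeff (T (monom 1 m)) i = (if i \<le> m then psi i * (psi (m - i) / psi m) * coeff (T (monom 1 (m - i))) 0 else 0)"
proof -
  have L: "poly_linear T" using assms(2) by (rule comD_lin)
  have "coeff (T (monom 1 m)) i = psi i * coeff (T ((psi_deriv psi ^^ i) (monom 1 m))) 0"
    by (subst coeff_via_D[OF assms(1)]) (simp add: comD_Dpow[OF assms(2)])
  also have "\<dots> = (if i \<le> m then psi i * (psi (m - i) / psi m) * coeff (T (monom 1 (m - i))) 0 else 0)"
    by (simp add: Dpow_monom[OF assms(1)] lin_monom[OF L, of "psi (m - i) / psi m"] lin_0[OF L])
  finally show ?thesis .
qed

lemma degree_T_monom: assumes "admissible_psi psi" "comD psi T"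
  shows "degree (T (monom 1 m)) \<le> m"
  by (rule degree_le) (simp add: coeff_T_monom[OF assms])

lemma coeff0_T: assumes "poly_linear T" "degree q \<le> N"
  shows "coeff (T q) 0 = (\<Sum>i\<le>N. coeff q i * coeff (T (monom 1 i)) 0)"
  by (subst lin_expand[OF assms]) (simp add: coeff_sum)

lemma sum_rev_atMost: "(\<Sum>i\<le>(m::nat). f i) = (\<Sum>i\<le>m. f (m - i))"
  by (rule sum.reindex_bij_witness[where i="\<lambda>i. m - i" and j="\<lambda>i. m - i"]) auto

lemma comD_commute_ev0: assumes "admissible_psi psi" "comD psi T" "comD psi U"
  shows "coeff (T (U (monom 1 m))) 0 = coeff (U (T (monom 1 m))) 0"
proof -
  have key: "coeff (A (B (monom 1 m))) 0 = (\<Sum>i\<le>m. psi i * (psi (m - i) / psi m) * coeff (B (monom 1 (m - i))) 0 * coeff (A (monom 1 i)) 0)"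
    if "comD psi A" "comD psi B" for A B
    apply (subst coeff0_T[OF comD_lin[OF that(1)] degree_T_monom[OF assms(1) that(2)]])
    apply (rule sum.cong)
     apply simp
    apply (subst coeff_T_monom[OF assms(1) that(2)])
    apply simp
    done
  show ?thesis
    apply (simp only: key[OF assms(2,3)] key[OF assms(3,2)])
    apply (subst sum_rev_atMost)
    apply (rule sum.cong)
     apply (auto simp: algebra_simps)
    done
qed

lemma comD_commute: assumes "admissible_psi psi" "comD psi T" "comD psi U"
  shows "T (U f) = U (T f)"
proof -
  have LT: "poly_linear T" and LU: "poly_linear U" using assms by (auto simp: comD_lin)
  have mon: "T (U (monom 1 m)) = U (T (monom 1 m))" for m
  proof (induction m)
    case 0
    let ?g = "T (U (monom 1 0)) - U (T (monom 1 0))"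
    have "psi_deriv psi ?g = 0"
      by (simp add: lin_diff[OF linear_D] comD_D[OF assms(2), symmetric] comD_D[OF assms(3), symmetric]
          D_monom nsub_def lin_0[OF LT] lin_0[OF LU])
    then have "?g = [:coeff ?g 0:]" by (rule kerD[OF assms(1)])
    also have "coeff ?g 0 = 0" using comD_commute_ev0[OF assms, of 0] by simp
    finally show ?case by simp
  next
    case (Suc m)
    let ?g = "T (U (monom 1 (Suc m))) - U (T (monom 1 (Suc m)))"
    have "psi_deriv psi ?g = 0"
      by (simp add: lin_diff[OF linear_D] comD_D[OF assms(2), symmetric] comD_D[OF assms(3), symmetric]
          D_monom lin_monom[OF LT, of "nsub psi (Suc m)"] lin_monom[OF LU, of "nsub psi (Suc m)"]
          lin_smult[OF LT] lin_smult[OF LU] Suc.IH)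
    then have "?g = [:coeff ?g 0:]" by (rule kerD[OF assms(1)])
    also have "coeff ?g 0 = 0" using comD_commute_ev0[OF assms, of "Suc m"] by simp
    finally show ?case by simp
  qed
  have "T (U f) = (T \<circ> U) f" by simp
  also have "\<dots> = (\<Sum>i\<le>degree f. smult (coeff f i) ((T \<circ> U) (monom 1 i)))"
    by (rule lin_expand[OF lin_comp[OF LT LU] order_refl])
  also have "\<dots> = (\<Sum>i\<le>degree f. smult (coeff f i) ((U \<circ> T) (monom 1 i)))"
    using mon by simp
  also have "\<dots> = (U \<circ> T) f"
    by (rule lin_expand[OF lin_comp[OF LU LT] order_refl, symmetric])
  finally show ?thesis by simp
qed

lemma Dpow_big: assumes "admissible_psi psi" "degree p < k" shows "(psi_deriv psi ^^ k) p = 0"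
  using assms by (auto simp: poly_eq_iff coeff_Dpow coeff_eq_0)

lemma E_ext: assumes "admissible_psi psi" "degree p \<le> N"
  shows "psi_exp psi a p = (\<Sum>k\<le>N. smult (a ^ k * psi k) ((psi_deriv psi ^^ k) p))"
proof -
  have "psi_exp psi a p = (\<Sum>k\<le>degree p. smult (a ^ k * psi k) ((psi_deriv psi ^^ k) p))"
    unfolding psi_exp_def nfact_def by simp
  also have "\<dots> = (\<Sum>k\<le>N. smult (a ^ k * psi k) ((psi_deriv psi ^^ k) p))"
    by (rule sum.mono_neutral_left) (use assms Dpow_big[OF assms(1)] in auto)
  finally show ?thesis .
qed

lemma comD_Sigma: assumes "admissible_psi psi" "comD psi T" shows "T \<in> Sigma_psi psi"
proof -
  have L: "poly_linear T" using assms(2) by (rule comD_lin)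
  have "T (psi_exp psi a p) = psi_exp psi a (T p)" for a p
  proof -
    let ?N = "degree p + degree (T p)"
    have "T (psi_exp psi a p) = (\<Sum>k\<le>?N. smult (a ^ k * psi k) (T ((psi_deriv psi ^^ k) p)))"
      by (simp add: E_ext[OF assms(1), of p ?N] lin_sum[OF L] lin_smult[OF L])
    also have "\<dots> = psi_exp psi a (T p)"
      by (simp add: E_ext[OF assms(1), of "T p" ?N] comD_Dpow[OF assms(2)])
    finally show ?thesis .
  qed
  then show ?thesis using L by (simp add: Sigma_psi_def)
qed

lemma Sigma_comD: assumes "admissible_psi psi" "T \<in> Sigma_psi psi" shows "comD psi T"
proof -
  have L: "poly_linear T" and E: "\<And>a p. T (psi_exp psi a p) = psi_exp psi a (T p)"
    using assms(2) by (auto simp: Sigma_psi_def)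
  have "coeff (T (psi_deriv psi p)) j = coeff (psi_deriv psi (T p)) j" for p j
  proof -
    define N where "N = degree p + degree (T p) + 1"
    have N: "degree p \<le> N" "degree (T p) \<le> N" "1 \<le> N" by (auto simp: N_def)
    define c where "c k = psi k * (coeff (T ((psi_deriv psi ^^ k) p)) j - coeff ((psi_deriv psi ^^ k) (T p)) j)" for k
    let ?P = "\<Sum>k\<le>N. monom (c k) k"
    have "poly ?P a = 0" for a
    proof -
      have "T (psi_exp psi a p) = (\<Sum>k\<le>N. smult (a ^ k * psi k) (T ((psi_deriv psi ^^ k) p)))"
        by (simp add: E_ext[OF assms(1) N(1)] lin_sum[OF L] lin_smult[OF L])
      moreover have "psi_exp psi a (T p) = (\<Sum>k\<le>N. smult (a ^ k * psi k) ((psi_deriv psi ^^ k) (T p)))"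
        by (simp add: E_ext[OF assms(1) N(2)])
      ultimately have "coeff (\<Sum>k\<le>N. smult (a ^ k * psi k) (T ((psi_deriv psi ^^ k) p))) j
          = coeff (\<Sum>k\<le>N. smult (a ^ k * psi k) ((psi_deriv psi ^^ k) (T p))) j"
        using E by metis
      then have "(\<Sum>k\<le>N. a ^ k * psi k * coeff (T ((psi_deriv psi ^^ k) p)) j)
          - (\<Sum>k\<le>N. a ^ k * psi k * coeff ((psi_deriv psi ^^ k) (T p)) j) = 0"
        by (simp add: coeff_sum)
      then have "(\<Sum>k\<le>N. c k * a ^ k) = 0"
        by (simp add: c_def sum_subtractf[symmetric] algebra_simps)
      then show ?thesis by (simp add: poly_sum poly_monom)
    qed
    then have "?P = 0" using poly_all_0_iff_0 by blast
    then have "coeff ?P 1 = 0" by simp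
    then have "c 1 = 0" using N(3) by (simp add: coeff_sum coeff_monom)
    then show ?thesis using adm_ne[OF assms(1), of 1] by (simp add: c_def)
  qed
  then show ?thesis using L by (simp add: comD_def poly_eq_iff)
qed

lemma comD_invertible: assumes adm: "admissible_psi psi" and T: "comD psi T" and t0: "coeff (T 1) 0 \<noteq> 0"
  shows "\<exists>R. comD psi R \<and> T \<circ> R = id \<and> R \<circ> T = id"
proof -
  have L: "poly_linear T" using T by (rule comD_lin)
  define t where "t = coeff (T 1) 0"
  have top: "coeff (T (monom 1 m)) m = t" for m
    using coeff_T_monom[OF adm T, of m m] adm_ne[OF adm, of m] by (simp add: adm_0[OF adm] t_def)
  have low: "coeff (T (monom 1 i)) m = 0" if "i < m" for i m
    using coeff_T_monom[OF adm T, of i m] that by simp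
  have inj0: "p = 0" if "T p = 0" for p
  proof (rule ccontr)
    assume p0: "p \<noteq> 0"
    let ?m = "degree p"
    have "coeff (T p) ?m = (\<Sum>i\<le>?m. coeff p i * coeff (T (monom 1 i)) ?m)"
      by (subst lin_expand[OF L order_refl]) (simp add: coeff_sum)
    also have "\<dots> = (\<Sum>i\<le>?m. if i = ?m then coeff p ?m * t else 0)"
      by (rule sum.cong) (auto simp: top low)
    also have "\<dots> = coeff p ?m * t" by simp
    finally have "coeff (T p) ?m \<noteq> 0" using p0 t0 by (simp add: t_def)
    then show False using that by simp
  qed
  have inj: "inj T"
  proof (rule injI)
    fix a b assume "T a = T b"
    then have "T (a - b) = 0" by (simp add: lin_diff[OF L])
    then show "a = b" using inj0 by fastforce
  qed
  have surj_lt: "\<forall>q. degree q < m \<longrightarrow> q \<in> range T" for m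
  proof (induction m)
    case 0 then show ?case by simp
  next
    case (Suc m)
    show ?case
    proof (intro allI impI)
      fix q :: "'a poly" assume dq: "degree q < Suc m"
      define c where "c = coeff q m / t"
      define q' where "q' = q - smult c (T (monom 1 m))"
      have dq': "degree q' \<le> m"
        unfolding q'_def using dq degree_T_monom[OF adm T, of m]
        by (intro degree_diff_le) (auto intro: order.trans[OF degree_smult_le])
      have cq': "coeff q' m = 0" using t0 by (simp add: q'_def c_def top t_def)
      have "q' \<in> range T"
      proof (cases "q' = 0")
        case True then show ?thesis using lin_0[OF L] by (metis rangeI)
      next
        case False
        then have "degree q' \<noteq> m" using cq' leading_coeff_neq_0 by metis
        then show ?thesis using Suc.IH dq' by auto
      qed
      then obtain p' where p': "q' = T p'" by auto
      have "q = q' + smult c (T (monom 1 m))" by (simp add: q'_def)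
      also have "\<dots> = T (p' + smult c (monom 1 m))"
        by (simp only: p' lin_add[OF L] lin_smult[OF L])
      finally have "q = T (p' + smult c (monom 1 m))" .
      then show "q \<in> range T" by blast
    qed
  qed
  have surj: "surj T"
  proof (rule surjI[of _ "\<lambda>q. SOME p. T p = q"])
    fix q
    have "q \<in> range T" using surj_lt[of "Suc (degree q)"] by simp
    then show "T (SOME p. T p = q) = q" by (metis (mono_tags, lifting) rangeE someI)
  qed
  define R where "R = inv T"
  have TR: "T (R q) = q" for q unfolding R_def by (rule surj_f_inv_f[OF surj])
  have RT: "R (T p) = p" for p unfolding R_def by (rule inv_f_f[OF inj])
  have "poly_linear R"
    unfolding poly_linear_def
  proof (intro conjI allI)
    fix p q
    have "R (p + q) = R (T (R p) + T (R q))" by (simp only: TR)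
    also have "\<dots> = R (T (R p + R q))" by (simp only: lin_add[OF L])
    finally show "R (p + q) = R p + R q" by (simp only: RT)
  next
    fix c p
    have "R (smult c p) = R (smult c (T (R p)))" by (simp only: TR)
    also have "\<dots> = R (T (smult c (R p)))" by (simp only: lin_smult[OF L])
    finally show "R (smult c p) = smult c (R p)" by (simp only: RT)
  qed
  moreover have "R (psi_deriv psi q) = psi_deriv psi (R q)" for q
  proof -
    have "R (psi_deriv psi q) = R (psi_deriv psi (T (R q)))" by (simp only: TR)
    also have "\<dots> = R (T (psi_deriv psi (R q)))" by (simp only: comD_D[OF T])
    finally show ?thesis by (simp only: RT)
  qed
  ultimately have "comD psi R" by (simp add: comD_def)
  moreover have "T \<circ> R = id" "R \<circ> T = id" by (auto simp: TR RT)
  ultimately show ?thesis by blast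
qed



theorem mainTheorem11:
  fixes psi :: "nat \<Rightarrow> 'a::field_char_0"
    and Q S Sinv :: "'a poly \<Rightarrow> 'a poly"
    and p :: "nat \<Rightarrow> 'a poly"
  assumes psi: "admissible_psi psi"
    and delta: "psi_delta psi Q"
    and QS: "Q = psi_deriv psi \<circ> S"
    and Sinv: "Sigma_inverse psi S Sinv"
    and basic: "psi_basic_seq psi Q p"
  shows "(\<forall>n>0. p n = pincherle psi Q ((Sinv ^^ (n + 1)) (monom 1 n)))
       \<and> (\<forall>n>0. p n = (Sinv ^^ n) (monom 1 n)
              - smult (nsub psi n / of_nat n) (pincherle psi (Sinv ^^ n) (monom 1 (n - 1))))
       \<and> (\<forall>n>0. p n = smult (nsub psi n / of_nat n) (xhat psi ((Sinv ^^ n) (monom 1 (n - 1)))))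
       \<and> (\<exists>R. Sigma_inverse psi (pincherle psi Q) R)
       \<and> (\<forall>R. Sigma_inverse psi (pincherle psi Q) R \<longrightarrow>
              (\<forall>n>0. p n = smult (nsub psi n / of_nat n) (xhat psi (R (p (n - 1))))))"
proof -
  let ?D = "psi_deriv psi" and ?X = "xhat psi"
  define W where "W = Sinv"
  define Sp where "Sp = pincherle psi S"
  define Qp where "Qp = pincherle psi Q"
  have cS: "comD psi S" and cW: "comD psi W"
    using Sinv Sigma_comD[OF psi] by (auto simp: Sigma_inverse_def W_def)
  have SW: "S (W f) = f" and WS: "W (S f) = f" for f
    using Sinv unfolding Sigma_inverse_def W_def by (metis comp_apply id_apply)+
  have cQ: "comD psi Q" unfolding QS by (rule comD_comp[OF comD_Dself cS])
  have LS: "poly_linear S" and LW: "poly_linear W" and LQ: "poly_linear Q"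
    using cS cW cQ by (auto simp: comD_lin)
  have cSp: "comD psi Sp" unfolding Sp_def by (rule comD_pinch[OF psi cS])
  have cQp: "comD psi Qp" unfolding Qp_def by (rule comD_pinch[OF psi cQ])
  have LSp: "poly_linear Sp" and LQp: "poly_linear Qp" using cSp cQp by (auto simp: comD_lin)
  have cWn: "comD psi (W ^^ n)" for n by (rule comD_funpow[OF cW])
  have LWn: "poly_linear (W ^^ n)" for n by (rule comD_lin[OF cWn])
  have Wsuc: "(W ^^ Suc n) f = W ((W ^^ n) f)" for n f by simp
  have Wsuc': "(W ^^ Suc n) f = (W ^^ n) (W f)" for n f by (simp only: funpow_Suc_right comp_apply)
  have Dmon: "?D (monom 1 n) = smult (nsub psi n) (monom 1 (n - 1))" for n
    by (simp add: D_monom smult_monom)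
  have Xmon: "?X (monom 1 (n - 1)) = monom (of_nat n / nsub psi n) n" if "n > 0" for n
    using that by (simp add: X_monom)
  have Qp_form: "Qp g = S g + ?D (Sp g)" for g
  proof -
    have "Qp g = ?D (S (?X g)) - ?X (?D (S g))" by (simp add: Qp_def pincherle_def QS)
    also have "S (?X g) = ?X (S g) + Sp g" by (simp add: Sp_def pincherle_def)
    finally show ?thesis
      by (simp add: lin_add[OF linear_D] DX[OF psi])
  qed
  have Wp: "pincherle psi W g = - W (W (Sp g))" for g
  proof -
    have "Sp (W g) = S (?X (W g)) - ?X g" by (simp add: Sp_def pincherle_def SW)
    then have "W (Sp (W g)) = ?X (W g) - W (?X g)" by (simp add: lin_diff[OF LW] WS)
    moreover have "Sp (W g) = W (Sp g)" by (rule comD_commute[OF psi cSp cW])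
    ultimately show ?thesis by (simp add: pincherle_def)
  qed
  have Wpow: "pincherle psi (W ^^ n) g = - smult (of_nat n) ((W ^^ (n + 1)) (Sp g))" for n g
  proof (induction n arbitrary: g)
    case 0 then show ?case by (simp add: pincherle_def)
  next
    case (Suc n)
    have "pincherle psi (W ^^ Suc n) g
        = W (pincherle psi (W ^^ n) g) + pincherle psi W ((W ^^ n) g)"
      by (simp add: pincherle_def lin_diff[OF LW])
    also have "\<dots> = - smult (of_nat n) ((W ^^ (n + 2)) (Sp g)) - W (W (Sp ((W ^^ n) g)))"
      by (simp add: Suc.IH Wp lin_neg[OF LW] lin_smult[OF LW])
    also have "Sp ((W ^^ n) g) = (W ^^ n) (Sp g)" by (rule comD_commute[OF psi cSp cWn])
    also have "W (W ((W ^^ n) (Sp g))) = (W ^^ (n + 2)) (Sp g)" by simp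
    also have "- smult (of_nat n) ((W ^^ (n + 2)) (Sp g)) - (W ^^ (n + 2)) (Sp g)
       = - smult (of_nat (Suc n)) ((W ^^ (Suc n + 1)) (Sp g))"
      by (simp add: smult_add_left algebra_simps del: funpow.simps)
    finally show ?case .
  qed
  define r where "r n = Qp ((W ^^ (n + 1)) (monom 1 n))" for n
  have Qr: "Q (r n) = smult (nsub psi n) (r (n - 1))" if "n > 0" for n
  proof -
    have "Q (r n) = Qp (Q ((W ^^ (n + 1)) (monom 1 n)))"
      unfolding r_def by (rule comD_commute[OF psi cQ cQp])
    also have "Q ((W ^^ (n + 1)) (monom 1 n)) = smult (nsub psi n) ((W ^^ n) (monom 1 (n - 1)))"
      by (simp add: QS SW comD_D[OF cWn, symmetric] Dmon lin_smult[OF LWn])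
    finally show ?thesis using that by (simp add: lin_smult[OF LQp] r_def)
  qed
  have r0: "r 0 = 1"
  proof -
    have "r 0 = S (W 1) + ?D (Sp (W 1))" by (simp add: r_def Qp_form)
    also have "?D (Sp (W 1)) = 0"
      by (simp add: comD_D[OF cSp, symmetric] comD_D[OF cW, symmetric] lin_0[OF LW] lin_0[OF LSp])
    finally show ?thesis by (simp add: SW)
  qed
  have I2: "r n = (W ^^ n) (monom 1 n) - smult (nsub psi n / of_nat n) (pincherle psi (W ^^ n) (monom 1 (n - 1)))"
    if n0: "n > 0" for n
  proof -
    have "r n = S ((W ^^ (n + 1)) (monom 1 n)) + ?D (Sp ((W ^^ (n + 1)) (monom 1 n)))"
      by (simp add: r_def Qp_form)
    also have "S ((W ^^ (n + 1)) (monom 1 n)) = (W ^^ n) (monom 1 n)" by (simp add: SW)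
    also have "?D (Sp ((W ^^ (n + 1)) (monom 1 n))) = smult (nsub psi n) ((W ^^ (n + 1)) (Sp (monom 1 (n - 1))))"
      apply (simp only: comD_D[OF cSp, symmetric] comD_D[OF cWn, symmetric] Dmon lin_smult[OF LWn]
             lin_smult[OF LSp] comD_commute[OF psi cSp cWn])
      done
    also have "(W ^^ (n + 1)) (Sp (monom 1 (n - 1))) = - smult (1 / of_nat n) (pincherle psi (W ^^ n) (monom 1 (n - 1)))"
      using n0 by (simp add: Wpow)
    finally show ?thesis by (simp add: algebra_simps)
  qed
  have I3: "(W ^^ n) (monom 1 n) - smult (nsub psi n / of_nat n) (pincherle psi (W ^^ n) (monom 1 (n - 1)))
      = smult (nsub psi n / of_nat n) (?X ((W ^^ n) (monom 1 (n - 1))))" if n0: "n > 0" for n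
  proof -
    have ns: "nsub psi n \<noteq> 0" by (rule nsub_ne[OF psi n0])
    have "pincherle psi (W ^^ n) (monom 1 (n - 1)) = smult (of_nat n / nsub psi n) ((W ^^ n) (monom 1 n))
         - ?X ((W ^^ n) (monom 1 (n - 1)))"
      by (simp only: pincherle_def Xmon[OF n0] lin_monom[OF LWn[of n], of "of_nat n / nsub psi n"])
    then show ?thesis using ns n0 by (simp add: smult_diff_right)
  qed
  have pb: "p 0 = 1" "\<And>n. n > 0 \<Longrightarrow> poly (p n) 0 = 0" "\<And>n. Q (p n) = smult (nsub psi n) (p (n - 1))"
    using basic by (auto simp: psi_basic_seq_def)
  have kerQ: "f = [:coeff f 0:]" if "Q f = 0" for f
  proof (rule kerD[OF psi])
    have "?D f = ?D (W (S f))" by (simp add: WS)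
    also have "\<dots> = W (Q f)" by (simp add: QS comD_D[OF cW])
    finally show "?D f = 0" using that lin_0[OF LW] by simp
  qed
  have pr: "p n = r n" for n
  proof (induction n)
    case 0 then show ?case using pb(1) r0 by simp
  next
    case (Suc n)
    let ?g = "p (Suc n) - r (Suc n)"
    have "Q ?g = 0" using Suc.IH by (simp add: lin_diff[OF LQ] pb(3) Qr)
    then have "?g = [:coeff ?g 0:]" by (rule kerQ)
    also have "coeff ?g 0 = 0"
      using pb(2)[of "Suc n"] I2[of "Suc n"] I3[of "Suc n"] by (simp add: poly_0_coeff_0 coeff_X)
    finally show ?case by simp
  qed
  have P1: "\<forall>n>0. p n = Qp ((W ^^ (n + 1)) (monom 1 n))" using pr r_def by simp
  have P2: "\<forall>n>0. p n = (W ^^ n) (monom 1 n)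
              - smult (nsub psi n / of_nat n) (pincherle psi (W ^^ n) (monom 1 (n - 1)))"
    using pr I2 by simp
  have P3: "\<forall>n>0. p n = smult (nsub psi n / of_nat n) (?X ((W ^^ n) (monom 1 (n - 1))))"
    using pr I2 I3 by simp
  have S1: "coeff (S 1) 0 \<noteq> 0"
  proof
    assume c: "coeff (S 1) 0 = 0"
    have "?D (S 1) = 0" by (simp add: comD_D[OF cS, symmetric] lin_0[OF LS])
    then have "S 1 = [:coeff (S 1) 0:]" by (rule kerD[OF psi])
    then have "S 1 = 0" using c by simp
    then have "W (S 1) = 0" using lin_0[OF LW] by simp
    then show False using WS[of 1] by simp
  qed
  have Qp1: "Qp 1 = S 1"
    by (simp add: Qp_form comD_D[OF cSp, symmetric] lin_0[OF LSp])
  obtain R0 where R0: "comD psi R0" "Qp \<circ> R0 = id" "R0 \<circ> Qp = id"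
    using comD_invertible[OF psi cQp] S1 Qp1 by auto
  have P4: "\<exists>R. Sigma_inverse psi Qp R"
    using R0 comD_Sigma[OF psi] cQp by (auto simp: Sigma_inverse_def)
  have P5: "\<forall>R. Sigma_inverse psi Qp R \<longrightarrow>
              (\<forall>n>0. p n = smult (nsub psi n / of_nat n) (?X (R (p (n - 1)))))"
  proof (intro allI impI)
    fix R n assume inv: "Sigma_inverse psi Qp R" and n0: "(n::nat) > 0"
    have RQ: "R (Qp f) = f" for f using inv unfolding Sigma_inverse_def by (metis comp_apply id_apply)
    have "p (n - 1) = Qp ((W ^^ n) (monom 1 (n - 1)))" using pr[of "n - 1"] n0 by (simp add: r_def)
    then have "R (p (n - 1)) = (W ^^ n) (monom 1 (n - 1))" by (simp add: RQ)
    then show "p n = smult (nsub psi n / of_nat n) (?X (R (p (n - 1))))" using P3 n0 by simp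
  qed
  show ?thesis using P1 P2 P3 P4 P5 unfolding W_def Qp_def by blast
qed

end
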